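(* Let $L=\{a^nb^m : n,m\in\mathbb{N},\ m\ge n\}$ over the alphabet $\{a,b\}$. Then $L\in\mathrm{RH}_1$ and $L\notin\mathrm{RD}$, i.e. $L$ is recognised by some history-deterministic $1$-VASS under reachability acceptance but by no deterministic $k$-VASS (for any $k$) under reachability acceptance.
   Context: Fix a finite alphabet $\Sigma$. A $k$-dimensional vector addition system with states ($k$-VASS) is a tuple $(Q,q_0,F,\delta)$ where $Q$ is a finite set of states, $q_0\in Q$ is initial, $F\subseteq Q$ is the set of accepting states, and $\delta\subseteq Q\times\Sigma\times\mathbb{Z}^k\times Q$ is a finite set of transitions (no $\varepsilon$-transitions). A run on a word $w=a_1\cdots a_n$ is a sequence of transitions $(p_{i-1},a_i,d_i,p_i)$ with $p_0=q_0$ such that the counter vectors $v_0=\vec 0$, $v_i=v_{i-1}+d_i$ all lie in $\mathbb{N}^k$. Under reachability acceptance the run is accepting if $p_n\in F$ and $v_n=\vec 0$. The language is the set of words having an accepting run. A VASS is deterministic if for every state $q$ and letter $a$ there is at most one transition $(q,a,d,q')$. A VASS is history-deterministic if there is a resolver, i.e. a function $r$ mapping each finite sequence of transitions and each letter $a$ to a transition labelled $a$, such that for every word $w$ in the language, the sequence of transitions obtained by successively applying $r$ to the letters of $w$ is a run on $w$ (counters stay nonnegative) and is accepting. $\mathrm{RD}_k$ (resp. $\mathrm{RH}_k$) is the class of languages recognised by deterministic (resp. history-deterministic) $k$-VASS under reachability acceptance, and $\mathrm{RD}=\bigcup_{k\ge1}\mathrm{RD}_k$. *)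

theory Defs
  imports Main
begin

datatype ab = A | B

type_synonym ('q,'a) trans = "'q \<times> 'a \<times> int list \<times> 'q"

record ('q,'a) vass =
  states :: "'q set"
  init :: 'q
  final :: "'q set"
  delta :: "('q,'a) trans set"

definition is_vass :: "'a set \<Rightarrow> nat \<Rightarrow> ('q,'a) vass \<Rightarrow> bool" where
  "is_vass Sig k V \<longleftrightarrow> finite (states V) \<and> init V \<in> states V \<and> final V \<subseteq> states V
     \<and> finite (delta V)
     \<and> (\<forall>(p,a,d,q) \<in> delta V. p \<in> states V \<and> q \<in> states V \<and> a \<in> Sig \<and> length d = k)"

definition vadd :: "int list \<Rightarrow> int list \<Rightarrow> int list" where
  "vadd v d = map2 (+) v d"

definition zerov :: "nat \<Rightarrow> int list" where
  "zerov k = replicate k 0"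

fun run_from :: "('q,'a) vass \<Rightarrow> 'q \<Rightarrow> int list \<Rightarrow> ('q,'a) trans list \<Rightarrow> ('q \<times> int list) option" where
  "run_from V p v [] = Some (p, v)"
| "run_from V p v ((p',a,d,q) # ts) =
     (if (p',a,d,q) \<in> delta V \<and> p' = p \<and> (\<forall>x \<in> set (vadd v d). x \<ge> 0)
      then run_from V q (vadd v d) ts else None)"

definition label :: "('q,'a) trans \<Rightarrow> 'a" where
  "label t = fst (snd t)"

definition is_run :: "nat \<Rightarrow> ('q,'a) vass \<Rightarrow> 'a list \<Rightarrow> ('q,'a) trans list \<Rightarrow> bool" where
  "is_run k V w ts \<longleftrightarrow> map label ts = w \<and> run_from V (init V) (zerov k) ts \<noteq> None"

definition is_accepting_run :: "nat \<Rightarrow> ('q,'a) vass \<Rightarrow> 'a list \<Rightarrow> ('q,'a) trans list \<Rightarrow> bool" where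
  "is_accepting_run k V w ts \<longleftrightarrow> map label ts = w \<and>
     (\<exists>q. q \<in> final V \<and> run_from V (init V) (zerov k) ts = Some (q, zerov k))"

definition lang :: "nat \<Rightarrow> ('q,'a) vass \<Rightarrow> 'a list set" where
  "lang k V = {w. \<exists>ts. is_accepting_run k V w ts}"

definition deterministic :: "('q,'a) vass \<Rightarrow> bool" where
  "deterministic V \<longleftrightarrow> (\<forall>p a d q d' q'. (p,a,d,q) \<in> delta V \<longrightarrow> (p,a,d',q') \<in> delta V
       \<longrightarrow> d = d' \<and> q = q')"

fun resolve_aux :: "(('q,'a) trans list \<Rightarrow> 'a \<Rightarrow> ('q,'a) trans) \<Rightarrow> ('q,'a) trans list \<Rightarrow> 'a list \<Rightarrow> ('q,'a) trans list" where
  "resolve_aux r h [] = h"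
| "resolve_aux r h (a # w) = resolve_aux r (h @ [r h a]) w"

definition resolve :: "(('q,'a) trans list \<Rightarrow> 'a \<Rightarrow> ('q,'a) trans) \<Rightarrow> 'a list \<Rightarrow> ('q,'a) trans list" where
  "resolve r w = resolve_aux r [] w"

definition is_resolver :: "nat \<Rightarrow> ('q,'a) vass \<Rightarrow> (('q,'a) trans list \<Rightarrow> 'a \<Rightarrow> ('q,'a) trans) \<Rightarrow> bool" where
  "is_resolver k V r \<longleftrightarrow>
     (\<forall>h a. r h a \<in> delta V \<and> label (r h a) = a) \<and>
     (\<forall>w \<in> lang k V. is_accepting_run k V w (resolve r w))"

definition history_deterministic :: "nat \<Rightarrow> ('q,'a) vass \<Rightarrow> bool" where
  "history_deterministic k V \<longleftrightarrow> (\<exists>r. is_resolver k V r)"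

text \<open>Classes RD_k and RH_k over alphabet Sig (state type: nat, w.l.o.g.).\<close>
definition RD :: "'a set \<Rightarrow> nat \<Rightarrow> 'a list set set" where
  "RD Sig k = {L. \<exists>V :: (nat,'a) vass. is_vass Sig k V \<and> deterministic V \<and> lang k V = L}"

definition RH :: "'a set \<Rightarrow> nat \<Rightarrow> 'a list set set" where
  "RH Sig k = {L. \<exists>V :: (nat,'a) vass. is_vass Sig k V \<and> history_deterministic k V \<and> lang k V = L}"

definition RD_all :: "'a set \<Rightarrow> 'a list set set" where
  "RD_all Sig = (\<Union>k\<in>{k. k \<ge> 1}. RD Sig k)"

definition Lab :: "ab list set" where
  "Lab = {replicate n A @ replicate m B | n m. m \<ge> n}"

end

theory Submission
  imports Defs
begin

lemma run_from_append:
  "run_from V p v (xs @ ys) = (case run_from V p v xs of None \<Rightarrow> None | Some (q,u) \<Rightarrow> run_from V q u ys)"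
  by (induction xs arbitrary: p v) auto

lemma vadd_len[simp]: "length (vadd v d) = min (length v) (length d)"
  by (simp add: vadd_def)

lemma vadd_nth: "l < length (vadd v d) \<Longrightarrow> vadd v d ! l = v ! l + d ! l"
  by (simp add: vadd_def)

lemma run_len: "run_from V p v ts = Some (q,u) \<Longrightarrow> length u \<le> length v"
proof (induction ts arbitrary: p v)
  case Nil then show ?case by simp
next
  case (Cons t ts)
  obtain p0 a d q0 where t: "t = (p0,a,d,q0)" by (cases t) auto
  from Cons.prems have "run_from V q0 (vadd v d) ts = Some (q,u)" by (auto simp: t split: if_splits)
  from Cons.IH[OF this] show ?case by simp
qed

lemma run_eff:
  "run_from V p v ts = Some (q,u) \<Longrightarrow> run_from V p v' ts = Some (q',u') \<Longrightarrow> length v = length v'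
   \<Longrightarrow> q = q' \<and> length u = length u' \<and> (\<forall>l<length u. u!l - v!l = u'!l - v'!l)"
proof (induction ts arbitrary: p v v')
  case Nil then show ?case by auto
next
  case (Cons t ts)
  obtain p0 a d q0 where t: "t = (p0,a,d,q0)" by (cases t) auto
  from Cons.prems have r1: "run_from V q0 (vadd v d) ts = Some (q,u)"
    and r2: "run_from V q0 (vadd v' d) ts = Some (q',u')" by (auto simp: t split: if_splits)
  have "length (vadd v d) = length (vadd v' d)" using Cons.prems(3) by simp
  from Cons.IH[OF r1 r2 this] have ih: "q = q'" "length u = length u'"
    "\<forall>l<length u. u!l - vadd v d!l = u'!l - vadd v' d!l" by auto
  have "u!l - v!l = u'!l - v'!l" if "l < length u" for l
  proof -
    have l1: "l < length (vadd v d)" using run_len[OF r1] that by simp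
    have l2: "l < length (vadd v' d)" using l1 Cons.prems(3) by simp
    show ?thesis using ih(3) that vadd_nth[OF l1] vadd_nth[OF l2] by auto
  qed
  then show ?case using ih by auto
qed

lemma run_len_k:
  assumes "is_vass Sig k V" "run_from V p v ts = Some (q,u)" "length v = k"
  shows "length u = k"
  using assms(2,3)
proof (induction ts arbitrary: p v)
  case Nil then show ?case by simp
next
  case (Cons t ts)
  obtain p0 a d q0 where t: "t = (p0,a,d,q0)" by (cases t) auto
  from Cons.prems have r1: "run_from V q0 (vadd v d) ts = Some (q,u)" and tin: "t \<in> delta V"
    by (auto simp: t split: if_splits)
  have "length d = k" using assms(1) tin unfolding is_vass_def t by auto
  then show ?case using Cons.IH[OF r1] Cons.prems(2) by simp
qed

lemma det_unique:
  assumes det: "deterministic V"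
  shows "run_from V p v ts \<noteq> None \<Longrightarrow> run_from V p v' ts' \<noteq> None \<Longrightarrow> map label ts = map label ts' \<Longrightarrow> ts = ts'"
proof (induction ts arbitrary: p v v' ts')
  case Nil then show ?case by simp
next
  case (Cons t ts)
  obtain t' ts'' where ts': "ts' = t' # ts''" using Cons.prems(3) by (cases ts') auto
  obtain p0 a d q0 where t: "t = (p0,a,d,q0)" by (cases t) auto
  obtain p1 a1 d1 q1 where t': "t' = (p1,a1,d1,q1)" by (cases t') auto
  from Cons.prems(1) have h1: "t \<in> delta V" "p0 = p" "run_from V q0 (vadd v d) ts \<noteq> None"
    by (auto simp: t split: if_splits)
  from Cons.prems(2) have h2: "t' \<in> delta V" "p1 = p" "run_from V q1 (vadd v' d1) ts'' \<noteq> None"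
    by (auto simp: t' ts' split: if_splits)
  have "a = a1" using Cons.prems(3) by (simp add: ts' t t' label_def)
  then have "d = d1 \<and> q0 = q1" using det h1 h2 unfolding deterministic_def t t' by blast
  then have tt: "t = t'" using \<open>a = a1\<close> h1 h2 t t' by simp
  have h3: "run_from V q0 (vadd v' d) ts'' \<noteq> None" using h2(3) \<open>d = d1 \<and> q0 = q1\<close> by simp
  have "ts = ts''" using Cons.IH[OF h1(3) h3] tt Cons.prems(3) ts' by simp
  then show ?case using tt ts' by simp
qed

lemma run_state:
  assumes "is_vass Sig k V" "p \<in> states V" "run_from V p v ts = Some (q,u)"
  shows "q \<in> states V"
  using assms(2,3)
proof (induction ts arbitrary: p v)
  case Nil then show ?case by simp
next
  case (Cons t ts)
  obtain p0 a d q0 where t: "t = (p0,a,d,q0)" by (cases t) auto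
  from Cons.prems have r1: "run_from V q0 (vadd v d) ts = Some (q,u)" and tin: "t \<in> delta V"
    by (auto simp: t split: if_splits)
  have "q0 \<in> states V" using assms(1) tin unfolding is_vass_def t by auto
  then show ?case using Cons.IH[OF _ r1] by simp
qed

lemma rep_eq:
  "replicate j A @ replicate i B = replicate n A @ replicate m B \<Longrightarrow> j = n \<and> i = m"
proof -
  assume h: "replicate j A @ replicate i B = replicate n A @ replicate m B"
  have "filter ((=) A) (replicate j A @ replicate i B) = filter ((=) A) (replicate n A @ replicate m B)"
    using h by simp
  then have "j = n" by (simp add: filter_replicate)
  moreover have "length (replicate j A @ replicate i B) = length (replicate n A @ replicate m B)"
    using h by simp
  ultimately show ?thesis by simp
qed

lemma in_Lab: "replicate j A @ replicate i B \<in> Lab \<longleftrightarrow> j \<le> i"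
  unfolding Lab_def using rep_eq by blast

lemma map_label_take:
  "map label ts = replicate n A @ replicate m B \<Longrightarrow> map label (take n ts) = replicate n A \<and> map label (drop n ts) = replicate m B"
  by (metis append_eq_conv_conj length_replicate take_map drop_map)


lemma acc_split:
  assumes "is_accepting_run k V (replicate n A @ replicate m B) ts"
  shows "\<exists>p v q. run_from V (init V) (zerov k) (take n ts) = Some (p,v) \<and>
     run_from V p v (drop n ts) = Some (q, zerov k) \<and> q \<in> final V \<and>
     map label (take n ts) = replicate n A \<and> map label (drop n ts) = replicate m B"
proof -
  from assms obtain q where q: "q \<in> final V" "run_from V (init V) (zerov k) ts = Some (q, zerov k)"
    and lab: "map label ts = replicate n A @ replicate m B"
    unfolding is_accepting_run_def by blast
  have "run_from V (init V) (zerov k) (take n ts @ drop n ts) = Some (q, zerov k)" using q by simp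
  then obtain p v where "run_from V (init V) (zerov k) (take n ts) = Some (p,v)"
    "run_from V p v (drop n ts) = Some (q, zerov k)"
    unfolding run_from_append by (auto split: option.splits)
  then show ?thesis using q map_label_take[OF lab] by blast
qed

lemma key:
  assumes vass: "is_vass Sig k V" and det: "deterministic V" and L: "lang k V = Lab"
    and ij: "i < j"
    and ti: "is_accepting_run k V (replicate i A @ replicate i B) tsi"
    and tj: "is_accepting_run k V (replicate j A @ replicate j B) tsj"
    and pi: "run_from V (init V) (zerov k) (take i tsi) = Some (p, vi)"
    and pj: "run_from V (init V) (zerov k) (take j tsj) = Some (p, vj)"
  shows False
proof -
  have "replicate i A @ replicate j B \<in> lang k V" using L in_Lab ij by simp
  then obtain zs where zs: "is_accepting_run k V (replicate i A @ replicate j B) zs"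
    unfolding lang_def by blast
  obtain p1 v1 q1 where z1: "run_from V (init V) (zerov k) (take i zs) = Some (p1,v1)"
     "run_from V p1 v1 (drop i zs) = Some (q1, zerov k)"
     "map label (take i zs) = replicate i A" "map label (drop i zs) = replicate j B"
    using acc_split[OF zs] by blast
  obtain p2 v2 q2 where t1: "run_from V (init V) (zerov k) (take i tsi) = Some (p2,v2)"
     "run_from V p2 v2 (drop i tsi) = Some (q2, zerov k)" "q2 \<in> final V"
     "map label (take i tsi) = replicate i A" "map label (drop i tsi) = replicate i B"
    using acc_split[OF ti] by blast
  obtain p3 v3 q3 where t2: "run_from V (init V) (zerov k) (take j tsj) = Some (p3,v3)"
     "run_from V p3 v3 (drop j tsj) = Some (q3, zerov k)"
     "map label (take j tsj) = replicate j A" "map label (drop j tsj) = replicate j B"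
    using acc_split[OF tj] by blast
  have e2: "p2 = p" "v2 = vi" using t1(1) pi by auto
  have e3: "p3 = p" "v3 = vj" using t2(1) pj by auto
  have "take i zs = take i tsi"
    using det_unique[OF det, of "init V" "zerov k" "take i zs" "zerov k" "take i tsi"] z1 t1 by simp
  then have e1: "p1 = p" "v1 = vi" using z1(1) pi by auto
  have dz: "drop i zs = drop j tsj"
    using det_unique[OF det, of p vi "drop i zs" vj "drop j tsj"] z1 t2 e1 e3 by simp
  have lz: "length (zerov k) = k" by (simp add: zerov_def)
  have li: "length vi = k" using run_len_k[OF vass pi lz] .
  have lj: "length vj = k" using run_len_k[OF vass pj lz] .
  have eff: "\<forall>l<length (zerov k). zerov k ! l - vi ! l = zerov k ! l - vj ! l"
    using run_eff[of V p vi "drop i zs" q1 "zerov k" vj q3 "zerov k"] z1(2) t2(2) e1 e3 dz li lj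
    by simp
  have "vi = vj"
  proof (rule nth_equalityI)
    show "length vi = length vj" using li lj by simp
    fix l assume "l < length vi"
    then show "vi ! l = vj ! l" using eff li lz by (simp add: zerov_def)
  qed
  have "run_from V (init V) (zerov k) (take j tsj @ drop i tsi) = Some (q2, zerov k)"
    unfolding run_from_append using pj t1(2) e2 \<open>vi = vj\<close> by simp
  moreover have "map label (take j tsj @ drop i tsi) = replicate j A @ replicate i B"
    using t1 t2 by simp
  ultimately have "replicate j A @ replicate i B \<in> lang k V"
    unfolding lang_def is_accepting_run_def using t1(3) by blast
  then show False using L in_Lab ij by simp
qed

lemma not_RD:
  assumes vass: "is_vass Sig k V" and det: "deterministic V" and L: "lang k V = Lab"
  shows False
proof -
  have acc: "\<exists>ts. is_accepting_run k V (replicate n A @ replicate n B) ts" for n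
    using L in_Lab[of n n] unfolding lang_def by blast
  define T where "T n = (SOME ts. is_accepting_run k V (replicate n A @ replicate n B) ts)" for n
  have T: "is_accepting_run k V (replicate n A @ replicate n B) (T n)" for n
    unfolding T_def using acc by (rule someI_ex)
  define P where "P n = the (run_from V (init V) (zerov k) (take n (T n)))" for n
  have PS: "run_from V (init V) (zerov k) (take n (T n)) = Some (P n)" for n
    using acc_split[OF T[of n]] unfolding P_def by auto
  have Pin: "fst (P n) \<in> states V" for n
  proof -
    obtain a b where ab: "P n = (a,b)" by (cases "P n")
    have "init V \<in> states V" using vass unfolding is_vass_def by auto
    from run_state[OF vass this PS[of n, unfolded ab]] show ?thesis using ab by simp
  qed
  have fin: "finite (states V)" using vass unfolding is_vass_def by auto
  have "\<not> inj_on (\<lambda>n. fst (P n)) {0..card (states V)}"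
  proof
    assume "inj_on (\<lambda>n. fst (P n)) {0..card (states V)}"
    from card_inj_on_le[OF this _ fin] Pin show False by auto
  qed
  then obtain x y where xy: "x \<noteq> y" "fst (P x) = fst (P y)" unfolding inj_on_def by blast
  have sym: False if "i < j" "fst (P i) = fst (P j)" for i j
    using key[OF vass det L that(1) T[of i] T[of j], of "fst (P i)" "snd (P i)" "snd (P j)"]
      PS[of i] PS[of j] that(2) by (metis prod.collapse)
  show False using xy sym by (metis linorder_neqE_nat)
qed


definition D1 :: "(nat, ab) trans set" where
  "D1 = {(0,A,[1],0), (0,B,[-1],1), (0,B,[0],1), (1,B,[-1],1), (1,B,[0],1)}"

definition V1 :: "(nat, ab) vass" where
  "V1 = \<lparr>states = {0,1}, init = 0, final = {0,1}, delta = D1\<rparr>"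

lemma V1_simps[simp]: "states V1 = {0,1}" "init V1 = 0" "final V1 = {0,1}" "delta V1 = D1"
  by (auto simp: V1_def)

lemma vadd1[simp]: "vadd [c] [d] = [c+d]" by (simp add: vadd_def)

lemma L1: "run_from V1 1 [c] ts = Some (q,u) \<Longrightarrow>
   \<exists>j e. u = [e] \<and> map label ts = replicate j B \<and> e \<ge> c - int j"
proof (induction ts arbitrary: c)
  case Nil then show ?case by force
next
  case (Cons t ts)
  obtain p0 a d q0 where t: "t = (p0,a,d,q0)" by (cases t) auto
  from Cons.prems have tin: "t \<in> D1" "p0 = 1" by (auto simp: t split: if_splits)
  then have cs: "t = (1,B,[-1],1) \<or> t = (1,B,[0],1)" by (auto simp: D1_def t)
  show ?case
  proof (cases "t = (1,B,[-1],1)")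
    case True
    then have "run_from V1 1 [c - 1] ts = Some (q,u)" using Cons.prems by (auto split: if_splits)
    from Cons.IH[OF this] obtain j e where "u = [e]" "map label ts = replicate j B" "e \<ge> c - 1 - int j"
      by blast
    moreover have "label t = B" using True by (simp add: label_def)
    ultimately have "u = [e] \<and> map label (t # ts) = replicate (Suc j) B \<and> e \<ge> c - int (Suc j)" by simp
    then show ?thesis by blast
  next
    case False
    then have tt: "t = (1,B,[0],1)" using cs by simp
    then have "run_from V1 1 [c] ts = Some (q,u)" using Cons.prems by (auto split: if_splits)
    from Cons.IH[OF this] obtain j e where "u = [e]" "map label ts = replicate j B" "e \<ge> c - int j"
      by blast
    moreover have "label t = B" using tt by (simp add: label_def)
    ultimately have "u = [e] \<and> map label (t # ts) = replicate (Suc j) B \<and> e \<ge> c - int (Suc j)" by simp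
    then show ?thesis by blast
  qed
qed

lemma L0: "run_from V1 0 [c] ts = Some (q,u) \<Longrightarrow>
   \<exists>i j e. u = [e] \<and> map label ts = replicate i A @ replicate j B \<and> e \<ge> c + int i - int j"
proof (induction ts arbitrary: c)
  case Nil then show ?case by force
next
  case (Cons t ts)
  obtain p0 a d q0 where t: "t = (p0,a,d,q0)" by (cases t) auto
  from Cons.prems have tin: "t \<in> D1" "p0 = 0" by (auto simp: t split: if_splits)
  then have cs: "t = (0,A,[1],0) \<or> t = (0,B,[-1],1) \<or> t = (0,B,[0],1)" by (auto simp: D1_def t)
  show ?case
  proof (cases "t = (0,A,[1],0)")
    case True
    then have "run_from V1 0 [c + 1] ts = Some (q,u)" using Cons.prems by (auto split: if_splits)
    from Cons.IH[OF this] obtain i j e where "u = [e]" "map label ts = replicate i A @ replicate j B"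
      "e \<ge> c + 1 + int i - int j" by blast
    moreover have "label t = A" using True by (simp add: label_def)
    ultimately have "u = [e] \<and> map label (t # ts) = replicate (Suc i) A @ replicate j B \<and> e \<ge> c + int (Suc i) - int j" by simp
    then show ?thesis by blast
  next
    case False
    then obtain dd where tt: "t = (0,B,[dd],1)" "dd \<ge> -1" using cs by auto
    then have "run_from V1 1 [c + dd] ts = Some (q,u)" using Cons.prems by (auto split: if_splits)
    from L1[OF this] obtain j e where "u = [e]" "map label ts = replicate j B" "e \<ge> c + dd - int j"
      by blast
    moreover have "label t = B" using tt by (simp add: label_def)
    ultimately have "u = [e] \<and> map label (t # ts) = replicate 0 A @ replicate (Suc j) B \<and> e \<ge> c + int 0 - int (Suc j)" using tt by simp
    then show ?thesis by blast
  qed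
qed

lemma lang_sub: "lang 1 V1 \<subseteq> Lab"
proof
  fix w assume "w \<in> lang 1 V1"
  then obtain ts q where "map label ts = w" "run_from V1 0 [0] ts = Some (q, [0])"
    unfolding lang_def is_accepting_run_def zerov_def by auto
  with L0[OF this(2)] show "w \<in> Lab" using in_Lab by force
qed


definition cntl :: "ab \<Rightarrow> (nat, ab) trans list \<Rightarrow> nat" where
  "cntl x h = length (filter (\<lambda>y. y = x) (map label h))"

definition tA :: "(nat, ab) trans" where "tA = (0,A,[1],0)"

definition r1 :: "(nat, ab) trans list \<Rightarrow> ab \<Rightarrow> (nat, ab) trans" where
  "r1 h a = (if a = A then tA else
     (if B \<in> set (map label h) then 1 else 0, B, if cntl A h > cntl B h then [-1] else [0], 1))"

definition g :: "nat \<Rightarrow> nat \<Rightarrow> (nat, ab) trans" where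
  "g n x = (if x = 0 then 0 else 1, B, if n > x then [-1] else [0], 1)"

lemma r1_ok: "r1 h a \<in> D1 \<and> label (r1 h a) = a"
  by (cases a) (auto simp: r1_def D1_def tA_def label_def)

lemma resolve_aux_append: "resolve_aux r h (u @ w) = resolve_aux r (resolve_aux r h u) w"
  by (induction u arbitrary: h) auto

lemma RA: "resolve_aux r1 h (replicate n A) = h @ replicate n tA"
  by (induction n arbitrary: h) (auto simp: r1_def replicate_append_same)

lemma labA: "map label (replicate n tA) = replicate n A" by (simp add: tA_def label_def)
lemma labB: "map label (map (g n) xs) = replicate (length xs) B"
  by (induction xs) (auto simp: g_def label_def)

lemma r1_B: "r1 (replicate n tA @ map (g n) [0..<j]) B = g n j"
proof -
  have m: "map label (replicate n tA @ map (g n) [0..<j]) = replicate n A @ replicate j B"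
    using labA labB[of n "[0..<j]"] by simp
  have "cntl A (replicate n tA @ map (g n) [0..<j]) = n"
    unfolding cntl_def m by (simp add: filter_replicate)
  moreover have "cntl B (replicate n tA @ map (g n) [0..<j]) = j"
    unfolding cntl_def m by (simp add: filter_replicate)
  moreover have "(B \<in> set (replicate n A @ replicate j B)) = (j \<noteq> 0)" by auto
  ultimately show ?thesis unfolding r1_def g_def m by simp
qed

lemma RB: "resolve_aux r1 (replicate n tA @ map (g n) [0..<j]) (replicate k B)
   = replicate n tA @ map (g n) [0..<j+k]"
proof (induction k arbitrary: j)
  case 0 then show ?case by simp
next
  case (Suc k)
  have "resolve_aux r1 (replicate n tA @ map (g n) [0..<j]) (replicate (Suc k) B)
     = resolve_aux r1 (replicate n tA @ map (g n) [0..<Suc j]) (replicate k B)"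
    by (simp add: r1_B)
  also have "\<dots> = replicate n tA @ map (g n) [0..<j + Suc k]" using Suc.IH[of "Suc j"] by simp
  finally show ?case .
qed

lemma resolve_w: "resolve r1 (replicate n A @ replicate m B) = replicate n tA @ map (g n) [0..<m]"
  unfolding resolve_def resolve_aux_append RA using RB[of n 0 m] by simp

lemma runA: "run_from V1 0 [c] (replicate n tA) = Some (0, [c + int n])" if "c \<ge> 0"
  using that by (induction n arbitrary: c) (auto simp: tA_def D1_def)

lemma runB: "run_from V1 0 [int n] (map (g n) [0..<m]) = Some (if m = 0 then 0 else 1, [int n - int (min n m)])"
proof (induction m)
  case 0 then show ?case by simp
next
  case (Suc m)
  have "run_from V1 0 [int n] (map (g n) [0..<Suc m]) =
     run_from V1 (if m = 0 then 0 else 1) [int n - int (min n m)] [g n m]"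
    using Suc.IH by (simp add: run_from_append)
  also have "\<dots> = Some (1, [int n - int (min n (Suc m))])"
    by (auto simp: g_def D1_def)
  finally show ?case by simp
qed

lemma Lab_acc: "w \<in> Lab \<Longrightarrow> is_accepting_run 1 V1 w (resolve r1 w)"
proof -
  assume "w \<in> Lab"
  then obtain n m where w: "w = replicate n A @ replicate m B" "n \<le> m" unfolding Lab_def by auto
  have "run_from V1 0 [0] (resolve r1 w) = Some (if m = 0 then 0 else 1, [0])"
    using w runA[of 0 n] runB[of n m] by (simp add: resolve_w run_from_append)
  moreover have "map label (resolve r1 w) = w" using w labA labB[of n "[0..<m]"] by (simp add: resolve_w)
  ultimately show ?thesis unfolding is_accepting_run_def zerov_def by auto
qed

lemma lang_V1: "lang 1 V1 = Lab"
  using lang_sub Lab_acc unfolding lang_def by blast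

lemma part1: "Lab \<in> RH UNIV 1"
proof -
  have "is_vass UNIV 1 V1" unfolding is_vass_def by (auto simp: D1_def)
  moreover have "is_resolver 1 V1 r1"
    unfolding is_resolver_def using r1_ok Lab_acc lang_V1 by auto
  ultimately show ?thesis unfolding RH_def history_deterministic_def using lang_V1 by blast
qed

theorem mainTheorem3:
  shows "Lab \<in> RH UNIV 1 \<and> Lab \<notin> RD_all UNIV"
  using part1 not_RD unfolding RD_all_def RD_def by blast

end
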